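(* For a greedy policy and an alternating policy applied to the same label sequences, with match counts $M_{\mathbf G}(n)$ and $M_{\mathbf A}(n)$, let $T_n:=\min\bigl(n,\inf\{k\ge1: S_{\mathbf G}(k+1)=\lceil n/2\rceil+1\ \text{or}\ R_{\mathbf G}(k+1)=\lceil n/2\rceil+1\}\bigr)$, $A_n:=\{R_{\mathbf G}(T_n)=\lceil n/2\rceil\}$, and define $G_n$ by $$2G_n:=\begin{cases}(\Gamma_{\mathbf R}[R_{\mathbf G}(n)]-\Gamma_{\mathbf R}[\lfloor n/2\rfloor])-(\Gamma_{\mathbf S}[\lfloor n/2\rfloor]-\Gamma_{\mathbf S}[S_{\mathbf G}(n)]) & \text{on } A_n,\\ (\Gamma_{\mathbf S}[S_{\mathbf G}(n)]-\Gamma_{\mathbf S}[\lfloor n/2\rfloor])-(\Gamma_{\mathbf R}[\lfloor n/2\rfloor]-\Gamma_{\mathbf R}[R_{\mathbf G}(n)]) & \text{on } A_n^c.\end{cases}$$ Then $$\frac{M_{\mathbf G}(n)-M_{\mathbf A}(n)}{n^{5/4}}-\frac{G_n}{n^{1/4}}\xrightarrow{a.s.}0\quad(n\to\infty).$$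
   Context: Let $(r_i)_{i\ge1}$, $(s_i)_{i\ge1}$ be probability vectors on the positive integers with $\mu:=\sum_i r_is_i>0$. Let $\{L_{\mathbf R}(n)\}_{n\ge1}$, $\{L_{\mathbf S}(n)\}_{n\ge1}$ be independent i.i.d. sequences with $\Pr(L_{\mathbf R}(1)=i)=r_i$, $\Pr(L_{\mathbf S}(1)=i)=s_i$. For $m\ge0$ let $\tilde N_{\mathbf R}(m)$ be the vector with entries $N_{\mathbf R}(m,i)=\sum_{j=1}^m\mathbf 1\{L_{\mathbf R}(j)=i\}$, and $\tilde N_{\mathbf S}(m)$ analogously. Put $X_{\mathbf R}(n)=s_{L_{\mathbf R}(n)}$, $X_{\mathbf S}(n)=r_{L_{\mathbf S}(n)}$ (common mean $\mu$, variances $\sigma_{\mathbf R}^2,\sigma_{\mathbf S}^2$; standing assumption $\sigma_{\mathbf R}+\sigma_{\mathbf S}>0$), $\Gamma_{\mathbf R}[m]=\sum_{j=1}^mX_{\mathbf R}(j)$, $\Gamma_{\mathbf S}[m]=\sum_{j=1}^mX_{\mathbf S}(j)$. A reading policy is a $\{0,1\}$-valued process $C(n)$ ($C(n)=1$ iff the $n$-th record is read from $\mathbf R$), $R(n)=\sum_{j\le n}C(j)$, $S(n)=n-R(n)$, with $C(n)$ being $\mathcal F_{n-1}$-measurable where $\mathcal F_n=\mathcal F_0\vee\sigma(L_{\mathbf R}(1),\dots,L_{\mathbf R}(R(n));L_{\mathbf S}(1),\dots,L_{\mathbf S}(S(n)))$ and $\mathcal F_0$ (randomization, for both policies) is independent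 of the labels. Matches: $M(n)=\tilde N_{\mathbf R}(R(n))\cdot\tilde N_{\mathbf S}(S(n))$. An alternating policy is $\mathcal F_0$-measurable with $R(2n)=n$ for all $n$. A greedy policy satisfies, for $n\ge1$, $C(n+1)=1$ if $\Gamma_{\mathbf S}[S(n)]>\Gamma_{\mathbf R}[R(n)]$ and $C(n+1)=0$ if $\Gamma_{\mathbf S}[S(n)]<\Gamma_{\mathbf R}[R(n)]$ (ties arbitrary); $R_{\mathbf G},S_{\mathbf G}$ denote its $R,S$. *)

theory Defs
  imports "HOL-Probability.Probability"
begin

text \<open>Reading policies are modelled as \<open>C :: nat \<Rightarrow> 'a \<Rightarrow> bool\<close>,
  \<open>C n \<omega>\<close> true iff the n-th record (n \<ge> 1) is read from R.\<close>

definition Rcnt :: "(nat \<Rightarrow> 'a \<Rightarrow> bool) \<Rightarrow> nat \<Rightarrow> 'a \<Rightarrow> nat" where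
  "Rcnt C n \<omega> = card {j \<in> {1..n}. C j \<omega>}"

definition Scnt :: "(nat \<Rightarrow> 'a \<Rightarrow> bool) \<Rightarrow> nat \<Rightarrow> 'a \<Rightarrow> nat" where
  "Scnt C n \<omega> = n - Rcnt C n \<omega>"

definition Ncnt :: "(nat \<Rightarrow> 'a \<Rightarrow> nat) \<Rightarrow> nat \<Rightarrow> nat \<Rightarrow> 'a \<Rightarrow> nat" where
  "Ncnt L m i \<omega> = card {j \<in> {1..m}. L j \<omega> = i}"

definition matches :: "(nat \<Rightarrow> 'a \<Rightarrow> nat) \<Rightarrow> (nat \<Rightarrow> 'a \<Rightarrow> nat) \<Rightarrow> (nat \<Rightarrow> 'a \<Rightarrow> bool) \<Rightarrow> nat \<Rightarrow> 'a \<Rightarrow> real" where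
  "matches LR LS C n \<omega> =
     (\<Sum>\<^sub>\<infinity>i\<in>{1..}. real (Ncnt LR (Rcnt C n \<omega>) i \<omega>) * real (Ncnt LS (Scnt C n \<omega>) i \<omega>))"

text \<open>Gam w L m = sum_{j=1}^m w(L j); Gamma_R = Gam s LR, Gamma_S = Gam r LS.\<close>
definition Gam :: "(nat \<Rightarrow> real) \<Rightarrow> (nat \<Rightarrow> 'a \<Rightarrow> nat) \<Rightarrow> nat \<Rightarrow> 'a \<Rightarrow> real" where
  "Gam w L m \<omega> = (\<Sum>j=1..m. w (L j \<omega>))"

definition revealed :: "(nat \<Rightarrow> 'a \<Rightarrow> nat) \<Rightarrow> (nat \<Rightarrow> 'a \<Rightarrow> nat) \<Rightarrow> (nat \<Rightarrow> 'a \<Rightarrow> bool) \<Rightarrow> nat \<Rightarrow> 'a \<Rightarrow> nat list \<times> nat list" where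
  "revealed LR LS C n \<omega> =
     (map (\<lambda>j. LR j \<omega>) [1..<Rcnt C n \<omega> + 1], map (\<lambda>j. LS j \<omega>) [1..<Scnt C n \<omega> + 1])"

definition info_sa :: "'a measure \<Rightarrow> (nat \<Rightarrow> 'a \<Rightarrow> nat) \<Rightarrow> (nat \<Rightarrow> 'a \<Rightarrow> nat) \<Rightarrow> (nat \<Rightarrow> 'a \<Rightarrow> bool) \<Rightarrow> nat \<Rightarrow> 'a measure" where
  "info_sa F0 LR LS C n =
     sigma (space F0) (sets F0 \<union> {revealed LR LS C n -` A \<inter> space F0 | A. True})"

definition reading_policy :: "'a measure \<Rightarrow> (nat \<Rightarrow> 'a \<Rightarrow> nat) \<Rightarrow> (nat \<Rightarrow> 'a \<Rightarrow> nat) \<Rightarrow> (nat \<Rightarrow> 'a \<Rightarrow> bool) \<Rightarrow> bool" where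
  "reading_policy F0 LR LS C \<longleftrightarrow>
     (\<forall>n\<ge>1. C n \<in> measurable (info_sa F0 LR LS C (n - 1)) (count_space UNIV))"

definition alternating_policy :: "'a measure \<Rightarrow> (nat \<Rightarrow> 'a \<Rightarrow> nat) \<Rightarrow> (nat \<Rightarrow> 'a \<Rightarrow> nat) \<Rightarrow> (nat \<Rightarrow> 'a \<Rightarrow> bool) \<Rightarrow> bool" where
  "alternating_policy F0 LR LS C \<longleftrightarrow> reading_policy F0 LR LS C \<and>
     (\<forall>n\<ge>1. C n \<in> measurable F0 (count_space UNIV)) \<and>
     (\<forall>n. \<forall>\<omega>\<in>space F0. Rcnt C (2 * n) \<omega> = n)"

definition greedy_policy :: "(nat \<Rightarrow> real) \<Rightarrow> (nat \<Rightarrow> real) \<Rightarrow> 'a measure \<Rightarrow> (nat \<Rightarrow> 'a \<Rightarrow> nat) \<Rightarrow> (nat \<Rightarrow> 'a \<Rightarrow> nat) \<Rightarrow> (nat \<Rightarrow> 'a \<Rightarrow> bool) \<Rightarrow> bool" where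
  "greedy_policy r s F0 LR LS C \<longleftrightarrow> reading_policy F0 LR LS C \<and>
     (\<forall>n\<ge>1. \<forall>\<omega>\<in>space F0.
        (Gam r LS (Scnt C n \<omega>) \<omega> > Gam s LR (Rcnt C n \<omega>) \<omega> \<longrightarrow> C (Suc n) \<omega>) \<and>
        (Gam r LS (Scnt C n \<omega>) \<omega> < Gam s LR (Rcnt C n \<omega>) \<omega> \<longrightarrow> \<not> C (Suc n) \<omega>))"

definition Tstop :: "(nat \<Rightarrow> 'a \<Rightarrow> bool) \<Rightarrow> nat \<Rightarrow> 'a \<Rightarrow> nat" where
  "Tstop C n \<omega> =
     (let c = nat \<lceil>real n / 2\<rceil>;
          K = {k. k \<ge> 1 \<and> (Scnt C (k + 1) \<omega> = c + 1 \<or> Rcnt C (k + 1) \<omega> = c + 1)}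
      in if K = {} then n else min n (Inf K))"

definition Aevent :: "(nat \<Rightarrow> 'a \<Rightarrow> bool) \<Rightarrow> nat \<Rightarrow> 'a \<Rightarrow> bool" where
  "Aevent C n \<omega> \<longleftrightarrow> Rcnt C (Tstop C n \<omega>) \<omega> = nat \<lceil>real n / 2\<rceil>"

definition Gn :: "(nat \<Rightarrow> real) \<Rightarrow> (nat \<Rightarrow> real) \<Rightarrow> (nat \<Rightarrow> 'a \<Rightarrow> nat) \<Rightarrow> (nat \<Rightarrow> 'a \<Rightarrow> nat) \<Rightarrow> (nat \<Rightarrow> 'a \<Rightarrow> bool) \<Rightarrow> nat \<Rightarrow> 'a \<Rightarrow> real" where
  "Gn r s LR LS C n \<omega> =
     (let f = nat \<lfloor>real n / 2\<rfloor>; R = Rcnt C n \<omega>; S = Scnt C n \<omega> in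
      (if Aevent C n \<omega>
       then (Gam s LR R \<omega> - Gam s LR f \<omega>) - (Gam r LS f \<omega> - Gam r LS S \<omega>)
       else (Gam r LS S \<omega> - Gam r LS f \<omega>) - (Gam s LR f \<omega> - Gam s LR R \<omega>)) / 2)"

end

theory Submission
  imports Defs "HOL-Real_Asymp.Real_Asymp"
begin

lemma expect_fun:
  fixes L :: "'a \<Rightarrow> nat" and p g :: "nat \<Rightarrow> real"
  assumes P: "prob_space M" and Lm: "L \<in> measurable M (count_space UNIV)"
    and dist: "\<And>i. measure M {\<omega> \<in> space M. L \<omega> = i} = p i"
    and pnn: "\<And>i. p i \<ge> 0" and psum: "p sums 1"
    and gb: "\<And>i. 0 \<le> g i \<and> g i \<le> 1"
  shows "prob_space.expectation M (\<lambda>\<omega>. g (L \<omega>)) = (\<Sum>i. p i * g i)"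
proof -
  interpret prob_space M by fact
  have eq: "distr M (count_space UNIV) L = density (count_space UNIV) (\<lambda>i. ennreal (p i))"
  proof (rule measure_eqI_countable[where A=UNIV])
    fix i :: nat
    have "emeasure (distr M (count_space UNIV) L) {i} = emeasure M {\<omega> \<in> space M. L \<omega> = i}"
      using Lm by (subst emeasure_distr) (auto intro!: arg_cong[where f="emeasure M"])
    also have "\<dots> = ennreal (p i)" using dist[of i] Lm
      by (subst emeasure_eq_measure) auto
    also have "\<dots> = emeasure (density (count_space UNIV) (\<lambda>i. ennreal (p i))) {i}"
      by (subst emeasure_density) (auto simp: nn_integral_count_space_finite)
    finally show "emeasure (distr M (count_space UNIV) L) {i} = emeasure (density (count_space UNIV) (\<lambda>i. ennreal (p i))) {i}" .
  qed auto
  have "expectation (\<lambda>\<omega>. g (L \<omega>)) = integral\<^sup>L (distr M (count_space UNIV) L) g"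
    using Lm by (subst integral_distr) auto
  also have "\<dots> = integral\<^sup>L (count_space UNIV) (\<lambda>i. p i * g i)"
    unfolding eq using pnn by (subst integral_density) auto
  also have "\<dots> = (\<Sum>i. p i * g i)"
  proof (rule integral_count_space_nat)
    have "summable (\<lambda>i. p i)" using psum by (simp add: sums_iff)
    then have "summable (\<lambda>i. norm (p i * g i))"
      by (rule summable_comparison_test'[where N=0]) (use gb pnn in \<open>auto simp: abs_mult intro!: mult_left_le\<close>)
    then show "integrable (count_space UNIV) (\<lambda>i. p i * g i)"
      by (simp add: integrable_count_space_nat_iff)
  qed
  finally show ?thesis .
qed

lemma conc:
  fixes Lf :: "'b \<Rightarrow> 'a \<Rightarrow> nat" and \<iota> :: "nat \<Rightarrow> 'b" and g :: "nat \<Rightarrow> real"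
  assumes P: "prob_space M"
    and indep: "prob_space.indep_vars M (\<lambda>_. count_space UNIV) Lf I"
    and inj: "inj \<iota>" and sub: "\<iota> ` {1..} \<subseteq> I"
    and gb: "\<And>i. 0 \<le> g i \<and> g i \<le> 1"
    and mean: "\<And>j. j \<ge> 1 \<Longrightarrow> prob_space.expectation M (\<lambda>\<omega>. g (Lf (\<iota> j) \<omega>)) = c"
    and m: "m \<ge> 1" and t: "t \<ge> 0"
  shows "measure M {\<omega> \<in> space M. t \<le> \<bar>(\<Sum>j=1..m. g (Lf (\<iota> j) \<omega>)) - real m * c\<bar>}
          \<le> 2 * exp (-2 * t\<^sup>2 / real m)"
proof -
  interpret prob_space M by fact
  have ind2: "indep_vars (\<lambda>_. borel) (\<lambda>k \<omega>. g (Lf k \<omega>)) (\<iota> ` {1..m})"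
    by (rule indep_vars_compose2[where X=Lf and M'="\<lambda>_. count_space UNIV"])
       (rule indep_vars_subset[OF indep], use sub in auto)
  have injm: "inj_on \<iota> {1..m}" using inj by (auto simp: inj_on_def inj_def)
  interpret H: Hoeffding_ineq M "\<iota> ` {1..m}" "\<lambda>k \<omega>. g (Lf k \<omega>)" "\<lambda>_. 0" "\<lambda>_. 1" "real m * c"
  proof unfold_locales
    show "real m * c \<equiv> (\<Sum>i\<in>\<iota> ` {1..m}. expectation (\<lambda>\<omega>. g (Lf i \<omega>)))"
    proof -
      have h: "(\<Sum>i\<in>\<iota> ` {1..m}. expectation (\<lambda>\<omega>. g (Lf i \<omega>))) = (\<Sum>j=1..m. c)"
        by (subst sum.reindex[OF injm]) (simp add: mean)
      have "(\<Sum>j=1..m. c) = real m * c" by simp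
      with h show "real m * c \<equiv> (\<Sum>i\<in>\<iota> ` {1..m}. expectation (\<lambda>\<omega>. g (Lf i \<omega>)))"
        by (intro eq_reflection) simp
    qed
  qed (use ind2 gb in auto)
  have "(\<Sum>i\<in>\<iota> ` {1..m}. ((1::real) - 0)\<^sup>2) = real m" using card_image[OF injm] by simp
  moreover have "\<And>\<omega>. (\<Sum>i\<in>\<iota> ` {1..m}. g (Lf i \<omega>)) = (\<Sum>j=1..m. g (Lf (\<iota> j) \<omega>))"
    by (subst sum.reindex[OF injm]) simp
  ultimately show ?thesis
    using H.Hoeffding_ineq_abs_ge[OF t] m by auto
qed

lemma summ_aux: "summable (\<lambda>m::nat. (2 * real m + 2) * (2 * exp (-2 * (real m powr (3/5))\<^sup>2 / real m)))"
proof (rule summable_comparison_test_bigo)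
  show "summable (\<lambda>n::nat. norm (1 / real n ^ 2))"
    using inverse_power_summable[of 2, where 'a=real] by (simp add: divide_inverse)
  show "(\<lambda>m::nat. (2 * real m + 2) * (2 * exp (-2 * (real m powr (3/5))\<^sup>2 / real m))) \<in> O(\<lambda>n. 1 / real n ^ 2)"
    by real_asymp
qed

lemma bc_grid:
  fixes Lf :: "'b \<Rightarrow> 'a \<Rightarrow> nat" and \<iota> :: "nat \<Rightarrow> 'b" and g :: "nat \<Rightarrow> nat \<Rightarrow> real"
    and K :: "nat \<Rightarrow> nat set" and c :: "nat \<Rightarrow> real"
  assumes P: "prob_space M"
    and indep: "prob_space.indep_vars M (\<lambda>_. count_space UNIV) Lf I"
    and inj: "inj \<iota>" and sub: "\<iota> ` {1..} \<subseteq> I"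
    and gb: "\<And>k i. 0 \<le> g k i \<and> g k i \<le> 1"
    and mean: "\<And>k j. j \<ge> 1 \<Longrightarrow> prob_space.expectation M (\<lambda>\<omega>. g k (Lf (\<iota> j) \<omega>)) = c k"
    and Kfin: "\<And>m. finite (K m)" and Kcard: "\<And>m. card (K m) \<le> 2 * m + 2"
  shows "AE \<omega> in M. eventually (\<lambda>m. \<forall>k\<in>K m.
            \<bar>(\<Sum>j=1..m. g k (Lf (\<iota> j) \<omega>)) - real m * c k\<bar> < real m powr (3/5)) sequentially"
proof -
  interpret prob_space M by fact
  have meas: "Lf (\<iota> j) \<in> measurable M (count_space UNIV)" if "j \<ge> 1" for j
    using indep sub that unfolding indep_vars_def by auto
  define B where "B m k = {\<omega> \<in> space M. real m powr (3/5) \<le> \<bar>(\<Sum>j=1..m. g k (Lf (\<iota> j) \<omega>)) - real m * c k\<bar>}" for m k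
  define A where "A m = (if m = 0 then {} else (\<Union>k\<in>K m. B m k))" for m
  have Bmeas: "B m k \<in> sets M" for m k
  proof -
    have "(\<lambda>\<omega>. (\<Sum>j=1..m. g k (Lf (\<iota> j) \<omega>))) \<in> borel_measurable M"
      by (intro borel_measurable_sum) (rule measurable_compose[OF meas], auto)
    then show ?thesis unfolding B_def by measurable
  qed
  have Ameas: "A m \<in> sets M" for m
    unfolding A_def using Bmeas Kfin by auto
  have Abound: "measure M (A m) \<le> (2 * real m + 2) * (2 * exp (-2 * (real m powr (3/5))\<^sup>2 / real m))" for m
  proof (cases "m = 0")
    case True then show ?thesis by (simp add: A_def)
  next
    case False
    have "measure M (A m) \<le> (\<Sum>k\<in>K m. measure M (B m k))"
      unfolding A_def using False Bmeas Kfin by (auto intro!: finite_measure_subadditive_finite)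
    also have "\<dots> \<le> (\<Sum>k\<in>K m. 2 * exp (-2 * (real m powr (3/5))\<^sup>2 / real m))"
      unfolding B_def
      by (intro sum_mono conc[OF P indep inj sub, where g="g k" for k]) (use gb mean False in auto)
    also have "\<dots> = real (card (K m)) * (2 * exp (-2 * (real m powr (3/5))\<^sup>2 / real m))" by simp
    also have "\<dots> \<le> (2 * real m + 2) * (2 * exp (-2 * (real m powr (3/5))\<^sup>2 / real m))"
      using Kcard[of m] by (intro mult_right_mono) (auto simp del: of_nat_add simp add: of_nat_le_iff[symmetric])
    finally show ?thesis .
  qed
  have summ: "summable (\<lambda>m. measure M (A m))"
    by (rule summable_comparison_test'[OF summ_aux[unfolded], where N=0]) (use Abound in auto)
  have "AE \<omega> in M. eventually (\<lambda>m. \<omega> \<in> space M - A m) sequentially"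
    by (rule borel_cantelli_AE1) (use Ameas summ in \<open>auto simp: emeasure_eq_measure\<close>)
  then show ?thesis
  proof (rule AE_mp[OF _ AE_I2], intro impI)
    fix \<omega> assume sp: "\<omega> \<in> space M" and ev: "eventually (\<lambda>m. \<omega> \<in> space M - A m) sequentially"
    show "eventually (\<lambda>m. \<forall>k\<in>K m. \<bar>(\<Sum>j=1..m. g k (Lf (\<iota> j) \<omega>)) - real m * c k\<bar> < real m powr (3/5)) sequentially"
      using eventually_conj[OF ev eventually_gt_at_top[of 0]]
      by eventually_elim (auto simp: A_def B_def sp not_le)
  qed
qed

definition cdfn :: "(nat \<Rightarrow> real) \<Rightarrow> nat \<Rightarrow> real" where
  "cdfn s k = (\<Sum>i\<le>k. s i)"

definition kq :: "(nat \<Rightarrow> real) \<Rightarrow> nat \<Rightarrow> nat \<Rightarrow> nat" where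
  "kq s m j = (LEAST k. cdfn s k \<ge> real j / real m)"

definition grid :: "(nat \<Rightarrow> real) \<Rightarrow> nat \<Rightarrow> nat set" where
  "grid s m = kq s m ` {1..<m} \<union> (\<lambda>j. kq s m j - 1) ` {1..<m}"

lemma grid_fin: "finite (grid s m)" by (simp add: grid_def)

lemma grid_card: "card (grid s m) \<le> 2 * m + 2"
proof -
  have "card (grid s m) \<le> card (kq s m ` {1..<m}) + card ((\<lambda>j. kq s m j - 1) ` {1..<m})"
    unfolding grid_def by (rule card_Un_le)
  also have "\<dots> \<le> card {1..<m} + card {1..<m}" by (intro add_mono card_image_le) auto
  finally show ?thesis by simp
qed

lemma cdf_mono: assumes "\<And>i. s i \<ge> 0" "k \<le> k'" shows "cdfn s k \<le> cdfn s k'"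
  unfolding cdfn_def using assms by (intro sum_mono2) auto

lemma cdf_le1: assumes "\<And>i. s i \<ge> 0" "s sums 1" shows "cdfn s k \<le> 1"
proof -
  have "cdfn s k = (\<Sum>i\<in>{..<Suc k}. s i)" unfolding cdfn_def by (simp add: lessThan_Suc_atMost)
  also have "\<dots> \<le> suminf s" using assms by (intro sum_le_suminf) (auto simp: sums_iff)
  finally show ?thesis using assms by (simp add: sums_iff)
qed

lemma cdf_nn: assumes "\<And>i. s i \<ge> 0" shows "cdfn s k \<ge> 0"
  unfolding cdfn_def using assms by (simp add: sum_nonneg)

lemma cdf_ex: assumes "\<And>i. s i \<ge> 0" "s sums 1" "x < 1" shows "\<exists>k. cdfn s k \<ge> x"
proof -
  have "(\<lambda>n. \<Sum>i<n. s i) \<longlonglongrightarrow> 1" using assms(2) by (simp add: sums_def)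
  then have "eventually (\<lambda>n. (\<Sum>i<n. s i) > x) sequentially"
    using assms(3) by (rule order_tendstoD)
  then obtain n where "(\<Sum>i<n. s i) > x" by (auto simp: eventually_sequentially)
  moreover have "(\<Sum>i<n. s i) \<le> cdfn s n" unfolding cdfn_def using assms(1) by (intro sum_mono2) auto
  ultimately show ?thesis by (intro exI[of _ n]) auto
qed

lemma kq_props:
  assumes nn: "\<And>i. s i \<ge> 0" and su: "s sums 1" and j: "1 \<le> j" "j < m"
  shows "cdfn s (kq s m j) \<ge> real j / real m" and "\<And>k. k < kq s m j \<Longrightarrow> cdfn s k < real j / real m"
proof -
  have "real j / real m < 1" using j by simp
  from cdf_ex[OF nn su this] obtain k where "cdfn s k \<ge> real j / real m" by blast
  then show "cdfn s (kq s m j) \<ge> real j / real m" unfolding kq_def by (rule LeastI)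
  show "cdfn s k < real j / real m" if "k < kq s m j" for k
    using not_less_Least[OF that[unfolded kq_def]] by simp
qed

definition Gc :: "(nat \<Rightarrow> nat) \<Rightarrow> nat \<Rightarrow> nat \<Rightarrow> real" where
  "Gc y m k = (\<Sum>j=1..m. if y j \<le> k then 1 else 0)"

lemma Gc_mono: "k \<le> k' \<Longrightarrow> Gc y m k \<le> Gc y m k'"
  unfolding Gc_def by (intro sum_mono) auto

lemma Gc_bounds: "0 \<le> Gc y m k" "Gc y m k \<le> real m"
proof -
  show "0 \<le> Gc y m k" unfolding Gc_def by (intro sum_nonneg) auto
  have "Gc y m k \<le> (\<Sum>j=1..m. 1)" unfolding Gc_def by (intro sum_mono) auto
  then show "Gc y m k \<le> real m" by simp
qed

lemma bracket:
  fixes t :: real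
  assumes nn: "\<And>i. s i \<ge> 0" and su: "s sums 1" and m: "m \<ge> 1"
    and t0: "t \<ge> 0" and gr: "\<forall>k\<in>grid s m. \<bar>Gc y m k - real m * cdfn s k\<bar> < t"
  shows "\<bar>Gc y m k - real m * cdfn s k\<bar> \<le> t + 1"
proof -
  have F1: "cdfn s k \<le> 1" and F0: "cdfn s k \<ge> 0" using cdf_le1[OF nn su] cdf_nn[OF nn] by auto
  define x where "x = real m * cdfn s k"
  have x0: "x \<ge> 0" and xm: "x \<le> real m" using F0 F1 m by (auto simp: x_def mult_left_le)
  have up: "Gc y m k - x \<le> t + 1"
  proof (cases "x \<ge> real m - 1")
    case True then show ?thesis using Gc_bounds(2)[of y m k] t0 by auto
  next
    case False
    define j where "j = nat \<lfloor>x\<rfloor> + 1"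
    have jx: "real j - 1 \<le> x" "x < real j" using x0 unfolding j_def by linarith+
    have j1: "1 \<le> j" and jm: "j < m" using jx False unfolding j_def by auto
    note kp = kq_props[OF nn su j1 jm]
    have "cdfn s k < real j / real m" using jx m by (simp add: x_def field_simps)
    then have kk: "k < kq s m j" using kp(1) cdf_mono[OF nn, of "kq s m j" k] by (meson le_less_trans not_less)
    then have "k \<le> kq s m j - 1" by simp
    then have "Gc y m k \<le> Gc y m (kq s m j - 1)" by (rule Gc_mono)
    moreover have "kq s m j - 1 \<in> grid s m" using j1 jm unfolding grid_def by auto
    then have "Gc y m (kq s m j - 1) < real m * cdfn s (kq s m j - 1) + t" using gr by force
    moreover have "cdfn s (kq s m j - 1) < real j / real m" using kp(2) kk by simp
    then have "real m * cdfn s (kq s m j - 1) < real j" using m by (simp add: field_simps)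
    ultimately show ?thesis using jx by linarith
  qed
  have lo: "x - Gc y m k \<le> t + 1"
  proof -
    define j where "j = min (nat \<lfloor>x\<rfloor>) (m - 1)"
    have jx: "real j \<le> x" "x \<le> real j + 1" using x0 xm m unfolding j_def by (auto simp: min_def) linarith+
    show ?thesis
    proof (cases "j = 0")
      case True then show ?thesis using jx Gc_bounds(1)[of y m k] t0 by auto
    next
      case False
      have j1: "1 \<le> j" using False by simp
      have jm: "j < m" using m unfolding j_def by auto
      note kp = kq_props[OF nn su j1 jm]
      have "cdfn s k \<ge> real j / real m" using jx m by (simp add: x_def field_simps)
      then have kk: "kq s m j \<le> k" using kp(2) by (meson not_less)
      then have "Gc y m (kq s m j) \<le> Gc y m k" by (rule Gc_mono)
      moreover have "kq s m j \<in> grid s m" using j1 jm unfolding grid_def by auto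
      then have "Gc y m (kq s m j) > real m * cdfn s (kq s m j) - t" using gr by force
      moreover have "real m * cdfn s (kq s m j) \<ge> real j" using kp(1) m by (simp add: field_simps)
      ultimately show ?thesis using jx by linarith
    qed
  qed
  show ?thesis using up lo unfolding x_def by linarith
qed

definition cnt :: "(nat \<Rightarrow> nat) \<Rightarrow> nat \<Rightarrow> nat \<Rightarrow> real" where
  "cnt y b i = real (card {j \<in> {1..b}. y j = i})"

definition Gs :: "(nat \<Rightarrow> real) \<Rightarrow> (nat \<Rightarrow> nat) \<Rightarrow> nat \<Rightarrow> real" where
  "Gs s x a = (\<Sum>j=1..a. s (x j))"

definition Mt :: "(nat \<Rightarrow> nat) \<Rightarrow> (nat \<Rightarrow> nat) \<Rightarrow> nat \<Rightarrow> nat \<Rightarrow> real" where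
  "Mt x y a b = (\<Sum>j=1..a. cnt y b (x j))"

lemma cnt_sum: "cnt y b i = (\<Sum>l=1..b. if y l = i then 1 else 0)"
proof -
  have "cnt y b i = (\<Sum>j\<in>{j \<in> {1..b}. y j = i}. 1)" unfolding cnt_def by simp
  also have "\<dots> = (\<Sum>l=1..b. if y l = i then 1 else 0)" by (subst sum.inter_filter) auto
  finally show ?thesis .
qed

lemma cnt_bounds: "0 \<le> cnt y b i" "cnt y b i \<le> real b"
proof -
  show "0 \<le> cnt y b i" by (simp add: cnt_def)
  have "card {j \<in> {1..b}. y j = i} \<le> card {1..b}" by (intro card_mono) auto
  then show "cnt y b i \<le> real b" by (simp add: cnt_def)
qed

lemma Mt_swap: "Mt x y a b = Mt y x b a"
proof -
  have "Mt x y a b = (\<Sum>j=1..a. \<Sum>l=1..b. if y l = x j then 1 else 0)"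
    unfolding Mt_def cnt_sum ..
  also have "\<dots> = (\<Sum>l=1..b. \<Sum>j=1..a. if y l = x j then 1 else 0)"
    by (rule sum.swap)
  also have "\<dots> = (\<Sum>l=1..b. \<Sum>j=1..a. if x j = y l then 1 else 0)"
    by (intro sum.cong refl) auto
  also have "\<dots> = Mt y x b a" unfolding Mt_def cnt_sum ..
  finally show ?thesis .
qed

lemma Mt_diff_up:
  assumes E: "\<And>i. \<bar>cnt y b i - real b * s i\<bar> \<le> E"
  shows "\<bar>Mt x y (a + d) b - Mt x y a b - real b * (Gs s x (a + d) - Gs s x a)\<bar> \<le> real d * E"
proof (induction d)
  case 0 then show ?case by simp
next
  case (Suc d)
  have "Mt x y (a + Suc d) b - Mt x y a b - real b * (Gs s x (a + Suc d) - Gs s x a)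
      = (Mt x y (a + d) b - Mt x y a b - real b * (Gs s x (a + d) - Gs s x a))
        + (cnt y b (x (Suc (a + d))) - real b * s (x (Suc (a + d))))"
    unfolding Mt_def Gs_def by (simp add: algebra_simps)
  also have "\<bar>\<dots>\<bar> \<le> real d * E + E"
    using Suc.IH E[of "x (Suc (a + d))"] by (simp only: abs_le_iff) linarith
  finally show ?case by (simp add: algebra_simps)
qed

lemma Mt_diff:
  assumes E: "\<And>i. \<bar>cnt y b i - real b * s i\<bar> \<le> E"
  shows "\<bar>Mt x y a' b - Mt x y a b - real b * (Gs s x a' - Gs s x a)\<bar> \<le> \<bar>real a' - real a\<bar> * E"
proof (cases "a \<le> a'")
  case True
  then obtain d where "a' = a + d" using le_Suc_ex by blast
  then show ?thesis using Mt_diff_up[OF E, of x a d] by simp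
next
  case False
  then obtain d where d: "a = a' + d" using le_Suc_ex[of a' a] by auto
  have "\<bar>Mt x y a' b - Mt x y a b - real b * (Gs s x a' - Gs s x a)\<bar>
      = \<bar>Mt x y (a' + d) b - Mt x y a' b - real b * (Gs s x (a' + d) - Gs s x a')\<bar>"
    unfolding d by (simp add: abs_minus_commute algebra_simps)
  also have "\<dots> \<le> real d * E" by (rule Mt_diff_up[OF E])
  finally show ?thesis using d by simp
qed

lemma Gs_diff:
  assumes "\<And>i. 0 \<le> s i \<and> s i \<le> 1"
  shows "\<bar>Gs s x a' - Gs s x a\<bar> \<le> \<bar>real a' - real a\<bar>"
proof -
  have up: "\<bar>Gs s x (a + d) - Gs s x a\<bar> \<le> real d" for a d
  proof (induction d)
    case 0 then show ?case by simp
  next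
    case (Suc d)
    have "Gs s x (a + Suc d) - Gs s x a = (Gs s x (a + d) - Gs s x a) + s (x (Suc (a + d)))"
      unfolding Gs_def by simp
    moreover have "Gs s x (a + d) - Gs s x a \<ge> 0"
    proof -
      have "Gs s x (a + d) - Gs s x a = (\<Sum>j\<in>{1..a + d} - {1..a}. s (x j))"
        unfolding Gs_def by (subst sum_diff) auto
      also have "\<dots> \<ge> 0" using assms by (intro sum_nonneg) auto
      finally show ?thesis .
    qed
    ultimately show ?case using Suc.IH assms[of "x (Suc (a + d))"] by simp
  qed
  show ?thesis
  proof (cases "a \<le> a'")
    case True
    then obtain d where "a' = a + d" using le_Suc_ex by blast
    then show ?thesis using up[of a d] by simp
  next
    case False
    then obtain d where d: "a = a' + d" using le_Suc_ex[of a' a] by auto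
    then show ?thesis using up[of a' d] by (simp add: abs_minus_commute)
  qed
qed

lemma Gs_bounds:
  assumes "\<And>i. 0 \<le> s i \<and> s i \<le> 1"
  shows "0 \<le> Gs s x a" "Gs s x a \<le> real a"
proof -
  show "0 \<le> Gs s x a" unfolding Gs_def using assms by (intro sum_nonneg) auto
  have "Gs s x a \<le> (\<Sum>j=1..a. 1)" unfolding Gs_def using assms by (intro sum_mono) auto
  then show "Gs s x a \<le> real a" by simp
qed

lemma Mt_diff2:
  assumes E: "\<And>i. \<bar>cnt x a i - real a * r i\<bar> \<le> E"
  shows "\<bar>Mt x y a b' - Mt x y a b - real a * (Gs r y b' - Gs r y b)\<bar> \<le> \<bar>real b' - real b\<bar> * E"
  using Mt_diff[OF E, of y b' b] by (simp add: Mt_swap[of x y])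

lemma Mt_crude:
  fixes s :: "nat \<Rightarrow> real"
  assumes sb: "\<And>i. 0 \<le> s i \<and> s i \<le> 1"
  shows "\<bar>Mt x y a' b - Mt x y a b\<bar> \<le> 2 * real b * \<bar>real a' - real a\<bar>"
proof -
  have E: "\<bar>cnt y b i - real b * s i\<bar> \<le> real b" for i
  proof -
    have "0 \<le> real b * s i" using sb[of i] by simp
    moreover have "real b * s i \<le> real b" using sb[of i] mult_left_le[of "s i" "real b"] by simp
    ultimately show ?thesis using cnt_bounds[of y b i] by (simp only: abs_le_iff) linarith
  qed
  have "\<bar>real b * (Gs s x a' - Gs s x a)\<bar> \<le> real b * \<bar>real a' - real a\<bar>"
    using Gs_diff[OF sb] by (simp add: abs_mult mult_left_mono)
  moreover have "\<bar>Mt x y a' b - Mt x y a b - real b * (Gs s x a' - Gs s x a)\<bar> \<le> real b * \<bar>real a' - real a\<bar>"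
    using Mt_diff[OF E, of x a' a] by (simp add: mult.commute)
  ultimately show ?thesis by (simp only: abs_le_iff) linarith
qed

lemma core_bound:
  fixes x y :: "nat \<Rightarrow> nat" and s r :: "nat \<Rightarrow> real" and \<mu> C :: real
    and R S RA SA n :: nat
  assumes sb: "\<And>i. 0 \<le> s i \<and> s i \<le> 1" and rb: "\<And>i. 0 \<le> r i \<and> r i \<le> 1"
    and mu: "\<mu> > 0" and C0: "C \<ge> 0"
    and HR: "\<And>m. \<bar>Gs s x m - \<mu> * real m\<bar> \<le> C + 2 * real m powr (3/5)"
    and HS: "\<And>m. \<bar>Gs r y m - \<mu> * real m\<bar> \<le> C + 2 * real m powr (3/5)"
    and NRb: "\<And>m i. \<bar>cnt x m i - real m * r i\<bar> \<le> C + 2 * real m powr (3/5)"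
    and NSb: "\<And>m i. \<bar>cnt y m i - real m * s i\<bar> \<le> C + 2 * real m powr (3/5)"
    and RS: "R + S = n" and bal: "\<bar>Gs s x R - Gs r y S\<bar> \<le> 1"
    and RSA: "RA + SA = n" and RAb: "RA = n div 2 \<or> RA = n div 2 + 1"
    and n1: "n \<ge> 1"
  shows "\<bar>Mt x y R S - Mt x y RA SA - real n / 2 * (Gs s x R - Gs s x (n div 2) + (Gs r y S - Gs r y (n div 2)))\<bar>
         \<le> (2 * ((5 + 2 * C) / (2 * \<mu>) + 1) * (C + 2) + ((5 + 2 * C) / (2 * \<mu>) + 1)\<^sup>2
             + ((5 + 2 * C) / (2 * \<mu>) + 1) + 4) * real n powr (6/5)"
proof -
  define f where "f = n div 2"
  define P where "P = real n powr (3/5)"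
  define K1 where "K1 = (5 + 2 * C) / (2 * \<mu>) + 1"
  define E where "E = C + 2 * P"
  define D where "D = \<bar>real R - real S\<bar>"
  define Q where "Q = D / 2 + 1"
  have P1: "P \<ge> 1" unfolding P_def using n1 by (intro ge_one_powr_ge_zero) auto
  have PP: "P * P = real n powr (6/5)" unfolding P_def by (simp flip: powr_add)
  have nP: "real n \<le> P * P" unfolding PP using n1 powr_mono[of 1 "6/5" "real n"] by simp
  have Pm: "real m powr (3/5) \<le> P" if "m \<le> n" for m unfolding P_def using that by (intro powr_mono2) auto
  have Rn: "R \<le> n" "S \<le> n" "f \<le> n" "RA \<le> n" "SA \<le> n" using RS RSA unfolding f_def by auto
  have h: "real f \<le> real n / 2" "real n / 2 \<le> real f + 1/2" unfolding f_def by linarith+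
  have "\<mu> * D \<le> 1 + 2 * C + 4 * P"
  proof -
    have "\<mu> * (real R - real S) = (Gs s x R - Gs r y S) - (Gs s x R - \<mu> * real R) + (Gs r y S - \<mu> * real S)"
      by (simp add: algebra_simps)
    moreover have "\<bar>Gs s x R - \<mu> * real R\<bar> \<le> C + 2 * P" using HR[of R] Pm[OF Rn(1)] by linarith
    moreover have "\<bar>Gs r y S - \<mu> * real S\<bar> \<le> C + 2 * P" using HS[of S] Pm[OF Rn(2)] by linarith
    ultimately have "\<bar>\<mu> * (real R - real S)\<bar> \<le> 1 + 2 * C + 4 * P" using bal by (simp only: abs_le_iff) linarith
    then show ?thesis using mu by (simp add: D_def abs_mult)
  qed
  then have "D \<le> (1 + 2 * C + 4 * P) / \<mu>" using mu by (simp add: field_simps)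
  also have "\<dots> \<le> (5 + 2 * C) * P / \<mu>"
  proof -
    have "(1 + 2 * C) * 1 \<le> (1 + 2 * C) * P" using P1 C0 by (intro mult_left_mono) auto
    then have "1 + 2 * C + 4 * P \<le> (5 + 2 * C) * P" by (simp add: algebra_simps)
    then show ?thesis using mu by (intro divide_right_mono) auto
  qed
  finally have Dle: "D \<le> (5 + 2 * C) * P / \<mu>" .
  have D0: "D \<ge> 0" unfolding D_def by simp
  have QK: "Q \<le> K1 * P"
  proof -
    have "D / 2 \<le> (5 + 2 * C) * P / \<mu> / 2" using Dle by simp
    moreover have "K1 * P = (5 + 2 * C) * P / \<mu> / 2 + P" unfolding K1_def by (simp add: field_simps)
    ultimately show ?thesis unfolding Q_def using P1 by linarith
  qed
  have D2K: "D / 2 \<le> K1 * P" using QK unfolding Q_def by simp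
  have Q0: "Q \<ge> 0" unfolding Q_def using D0 by simp
  have K10: "K1 \<ge> 0" unfolding K1_def using C0 mu by simp
  have E0: "E \<ge> 0" unfolding E_def using C0 P1 by simp
  have EK: "E \<le> (C + 2) * P" unfolding E_def using P1 C0 mult_left_mono[of 1 P C] by (simp add: algebra_simps)
  have Rf: "\<bar>real R - real f\<bar> \<le> Q" and Sf: "\<bar>real S - real f\<bar> \<le> Q"
  proof -
    have rs: "real R + real S = real n" using RS by (simp flip: of_nat_add)
    have d1: "real R - real S \<le> D" "real S - real R \<le> D" unfolding D_def by auto
    show "\<bar>real R - real f\<bar> \<le> Q" using h rs d1 unfolding Q_def by (simp only: abs_le_iff) linarith
    show "\<bar>real S - real f\<bar> \<le> Q" using h rs d1 unfolding Q_def by (simp only: abs_le_iff) linarith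
  qed
  have T1: "\<bar>Mt x y R S - Mt x y R f - real R * (Gs r y S - Gs r y f)\<bar> \<le> Q * E"
  proof -
    have "\<bar>cnt x R i - real R * r i\<bar> \<le> E" for i using NRb[of R i] Pm[OF Rn(1)] unfolding E_def by linarith
    from Mt_diff2[OF this, of y S f] have "\<bar>Mt x y R S - Mt x y R f - real R * (Gs r y S - Gs r y f)\<bar> \<le> \<bar>real S - real f\<bar> * E" .
    also have "\<dots> \<le> Q * E" using Sf E0 by (rule mult_right_mono)
    finally show ?thesis .
  qed
  have T2: "\<bar>Mt x y R f - Mt x y f f - real f * (Gs s x R - Gs s x f)\<bar> \<le> Q * E"
  proof -
    have "\<bar>cnt y f i - real f * s i\<bar> \<le> E" for i using NSb[of f i] Pm[OF Rn(3)] unfolding E_def by linarith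
    from Mt_diff[OF this, of x R f] have "\<bar>Mt x y R f - Mt x y f f - real f * (Gs s x R - Gs s x f)\<bar> \<le> \<bar>real R - real f\<bar> * E" .
    also have "\<dots> \<le> Q * E" using Rf E0 by (rule mult_right_mono)
    finally show ?thesis .
  qed
  have T3: "\<bar>Mt x y RA SA - Mt x y f f\<bar> \<le> 4 * real n"
  proof -
    have a: "\<bar>real RA - real f\<bar> \<le> 1" "\<bar>real SA - real f\<bar> \<le> 1" using RAb RSA unfolding f_def by auto
    have "\<bar>Mt x y RA SA - Mt x y RA f\<bar> \<le> 2 * real RA * \<bar>real SA - real f\<bar>"
      using Mt_crude[OF rb, where x=y and y=x and a'=SA and a=f and b=RA] Mt_swap[of x y RA SA] Mt_swap[of x y RA f]
      by simp
    also have "\<dots> \<le> 2 * real n * 1" using a Rn by (intro mult_mono) auto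
    finally have 1: "\<bar>Mt x y RA SA - Mt x y RA f\<bar> \<le> 2 * real n" by simp
    have "\<bar>Mt x y RA f - Mt x y f f\<bar> \<le> 2 * real f * \<bar>real RA - real f\<bar>"
      by (rule Mt_crude[OF sb])
    also have "\<dots> \<le> 2 * real n * 1" using a Rn by (intro mult_mono) auto
    finally have 2: "\<bar>Mt x y RA f - Mt x y f f\<bar> \<le> 2 * real n" by simp
    from 1 2 show ?thesis by (simp only: abs_le_iff) linarith
  qed
  have T4: "\<bar>(real R - real n / 2) * (Gs r y S - Gs r y f)\<bar> \<le> D / 2 * Q"
  proof -
    have e: "\<bar>real R - real n / 2\<bar> = D / 2" unfolding D_def using RS by (simp add: abs_if)
    have "\<bar>Gs r y S - Gs r y f\<bar> \<le> Q" using Gs_diff[where s=r, OF rb, where x=y and a'=S and a=f] Sf by linarith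
    then have "D / 2 * \<bar>Gs r y S - Gs r y f\<bar> \<le> D / 2 * Q" using D0 by (intro mult_left_mono) auto
    then show ?thesis by (simp only: abs_mult e)
  qed
  have T5: "\<bar>(real f - real n / 2) * (Gs s x R - Gs s x f)\<bar> \<le> 1 / 2 * Q"
  proof -
    have a: "\<bar>real f - real n / 2\<bar> \<le> 1/2" using h by linarith
    have b: "\<bar>Gs s x R - Gs s x f\<bar> \<le> Q" using Gs_diff[where s=s, OF sb, where x=x and a'=R and a=f] Rf by linarith
    have "\<bar>real f - real n / 2\<bar> * \<bar>Gs s x R - Gs s x f\<bar> \<le> 1 / 2 * Q"
      using a b Q0 by (intro mult_mono) auto
    then show ?thesis by (simp only: abs_mult)
  qed
  have ident: "Mt x y R S - Mt x y RA SA - real n / 2 * (Gs s x R - Gs s x f + (Gs r y S - Gs r y f))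
     = (Mt x y R S - Mt x y R f - real R * (Gs r y S - Gs r y f))
       + (Mt x y R f - Mt x y f f - real f * (Gs s x R - Gs s x f))
       + (real R - real n / 2) * (Gs r y S - Gs r y f)
       + (real f - real n / 2) * (Gs s x R - Gs s x f)
       - (Mt x y RA SA - Mt x y f f)"
    by (simp add: algebra_simps)
  have tot: "\<bar>Mt x y R S - Mt x y RA SA - real n / 2 * (Gs s x R - Gs s x f + (Gs r y S - Gs r y f))\<bar>
     \<le> Q * E + Q * E + D / 2 * Q + 1 / 2 * Q + 4 * real n"
    unfolding ident using T1 T2 T3 T4 T5 by (simp only: abs_le_iff) linarith
  have b1: "Q * E \<le> (K1 * P) * ((C + 2) * P)" using QK EK Q0 E0 by (intro mult_mono) auto
  have b2: "D / 2 * Q \<le> (K1 * P) * (K1 * P)" using D2K QK Q0 D0 K10 P1 by (intro mult_mono) auto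
  have b3: "1 / 2 * Q \<le> K1 * (P * P)"
  proof -
    have "1 / 2 * Q \<le> Q" using Q0 by simp
    also have "\<dots> \<le> K1 * P" by (rule QK)
    also have "\<dots> \<le> K1 * (P * P)" using K10 P1 by (intro mult_left_mono) auto
    finally show ?thesis .
  qed
  have "Q * E + Q * E + D / 2 * Q + 1 / 2 * Q + 4 * real n
       \<le> (2 * K1 * (C + 2) + K1\<^sup>2 + K1 + 4) * (P * P)"
    using b1 b2 b3 nP by (simp add: algebra_simps power2_eq_square)
  with tot show ?thesis unfolding PP K1_def f_def by simp
qed

lemma core_lim:
  fixes x y :: "nat \<Rightarrow> nat" and s r :: "nat \<Rightarrow> real" and \<mu> C :: real
    and R S RA SA :: "nat \<Rightarrow> nat"
  assumes sb: "\<And>i. 0 \<le> s i \<and> s i \<le> 1" and rb: "\<And>i. 0 \<le> r i \<and> r i \<le> 1"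
    and mu: "\<mu> > 0" and C0: "C \<ge> 0"
    and HR: "\<And>m. \<bar>Gs s x m - \<mu> * real m\<bar> \<le> C + 2 * real m powr (3/5)"
    and HS: "\<And>m. \<bar>Gs r y m - \<mu> * real m\<bar> \<le> C + 2 * real m powr (3/5)"
    and NRb: "\<And>m i. \<bar>cnt x m i - real m * r i\<bar> \<le> C + 2 * real m powr (3/5)"
    and NSb: "\<And>m i. \<bar>cnt y m i - real m * s i\<bar> \<le> C + 2 * real m powr (3/5)"
    and RS: "\<And>n. n \<ge> 1 \<Longrightarrow> R n + S n = n" and bal: "\<And>n. n \<ge> 1 \<Longrightarrow> \<bar>Gs s x (R n) - Gs r y (S n)\<bar> \<le> 1"
    and RSA: "\<And>n. n \<ge> 1 \<Longrightarrow> RA n + SA n = n" and RAb: "\<And>n. n \<ge> 1 \<Longrightarrow> RA n = n div 2 \<or> RA n = n div 2 + 1"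
  shows "(\<lambda>n. (Mt x y (R n) (S n) - Mt x y (RA n) (SA n)) / real n powr (5/4)
            - ((Gs s x (R n) - Gs s x (n div 2) + (Gs r y (S n) - Gs r y (n div 2))) / 2) / real n powr (1/4))
         \<longlonglongrightarrow> 0"
proof -
  define K where "K = (2 * ((5 + 2 * C) / (2 * \<mu>) + 1) * (C + 2) + ((5 + 2 * C) / (2 * \<mu>) + 1)\<^sup>2
             + ((5 + 2 * C) / (2 * \<mu>) + 1) + 4)"
  have lim: "(\<lambda>n::nat. K * real n powr (6/5) / real n powr (5/4)) \<longlonglongrightarrow> 0" by real_asymp
  show ?thesis
  proof (rule Lim_null_comparison[OF _ lim])
    show "eventually (\<lambda>n. norm ((Mt x y (R n) (S n) - Mt x y (RA n) (SA n)) / real n powr (5/4)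
            - ((Gs s x (R n) - Gs s x (n div 2) + (Gs r y (S n) - Gs r y (n div 2))) / 2) / real n powr (1/4))
          \<le> K * real n powr (6/5) / real n powr (5/4)) sequentially"
      using eventually_ge_at_top[of 1]
    proof eventually_elim
      case (elim n)
      have np: "real n powr (5/4) = real n * real n powr (1/4)"
      proof -
        have "real n powr (5/4) = real n powr (1 + 1/4)" by simp
        also have "\<dots> = real n powr 1 * real n powr (1/4)" by (rule powr_add)
        finally show ?thesis using elim by simp
      qed
      have pos: "real n powr (5/4) > 0" using elim by simp
      have eq: "(Mt x y (R n) (S n) - Mt x y (RA n) (SA n)) / real n powr (5/4)
            - ((Gs s x (R n) - Gs s x (n div 2) + (Gs r y (S n) - Gs r y (n div 2))) / 2) / real n powr (1/4)
          = (Mt x y (R n) (S n) - Mt x y (RA n) (SA n) - real n / 2 * (Gs s x (R n) - Gs s x (n div 2) + (Gs r y (S n) - Gs r y (n div 2)))) / real n powr (5/4)"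
        using elim unfolding np by (simp add: field_simps)
      have b: "\<bar>Mt x y (R n) (S n) - Mt x y (RA n) (SA n) - real n / 2 * (Gs s x (R n) - Gs s x (n div 2) + (Gs r y (S n) - Gs r y (n div 2)))\<bar>
          \<le> K * real n powr (6/5)"
        unfolding K_def
        by (rule core_bound[OF sb rb mu C0 HR HS NRb NSb RS[OF elim] bal[OF elim] RSA[OF elim] RAb[OF elim] elim])
      show ?case unfolding eq real_norm_def using b pos by (simp add: abs_div divide_right_mono)
    qed
  qed
qed

lemma Rcnt_Suc: "Rcnt C (Suc n) \<omega> = Rcnt C n \<omega> + (if C (Suc n) \<omega> then 1 else 0)"
proof -
  have "{j \<in> {1..Suc n}. C j \<omega>} = {j \<in> {1..n}. C j \<omega>} \<union> (if C (Suc n) \<omega> then {Suc n} else {})"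
    by (auto simp: le_Suc_eq)
  then show ?thesis unfolding Rcnt_def by (simp add: card_insert_if)
qed

lemma Rcnt_le: "Rcnt C n \<omega> \<le> n"
proof -
  have "Rcnt C n \<omega> \<le> card {1..n}" unfolding Rcnt_def by (intro card_mono) auto
  then show ?thesis by simp
qed

lemma Scnt_Suc: "Scnt C (Suc n) \<omega> = Scnt C n \<omega> + (if C (Suc n) \<omega> then 0 else 1)"
  unfolding Scnt_def using Rcnt_Suc[of C n \<omega>] Rcnt_le[of C n \<omega>] by auto

lemma Gam_Gs: "Gam w L m \<omega> = Gs w (\<lambda>j. L j \<omega>) m"
  unfolding Gam_def Gs_def ..

lemma Gs_Suc: "Gs w x (Suc m) = Gs w x m + w (x (Suc m))"
  unfolding Gs_def by simp

lemma greedy_bal: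
  assumes sb: "\<And>i. 0 \<le> s i \<and> s i \<le> 1" and rb: "\<And>i. 0 \<le> r i \<and> r i \<le> 1"
    and gr: "\<forall>n\<ge>1. (Gam r LS (Scnt C n \<omega>) \<omega> > Gam s LR (Rcnt C n \<omega>) \<omega> \<longrightarrow> C (Suc n) \<omega>) \<and>
        (Gam r LS (Scnt C n \<omega>) \<omega> < Gam s LR (Rcnt C n \<omega>) \<omega> \<longrightarrow> \<not> C (Suc n) \<omega>)"
    and n: "n \<ge> 1"
  shows "\<bar>Gs s (\<lambda>j. LR j \<omega>) (Rcnt C n \<omega>) - Gs r (\<lambda>j. LS j \<omega>) (Scnt C n \<omega>)\<bar> \<le> 1"
  using n
proof (induction n rule: dec_induct)
  case base
  have "Rcnt C 0 \<omega> = 0" "Scnt C 0 \<omega> = 0" unfolding Rcnt_def Scnt_def by auto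
  then show ?case using Rcnt_Suc[of C 0 \<omega>] Scnt_Suc[of C 0 \<omega>] sb rb
    by (auto simp: Gs_Suc Gs_def)
next
  case (step n)
  define a where "a = Gs s (\<lambda>j. LR j \<omega>) (Rcnt C n \<omega>)"
  define b where "b = Gs r (\<lambda>j. LS j \<omega>) (Scnt C n \<omega>)"
  have g1: "b > a \<Longrightarrow> C (Suc n) \<omega>" and g2: "b < a \<Longrightarrow> \<not> C (Suc n) \<omega>"
    using gr step(1) unfolding a_def b_def Gam_Gs by auto
  show ?case
  proof (cases "C (Suc n) \<omega>")
    case True
    then have "Gs s (\<lambda>j. LR j \<omega>) (Rcnt C (Suc n) \<omega>) = a + s (LR (Suc (Rcnt C n \<omega>)) \<omega>)"
      "Gs r (\<lambda>j. LS j \<omega>) (Scnt C (Suc n) \<omega>) = b"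
      unfolding a_def b_def by (simp_all add: Rcnt_Suc Scnt_Suc Gs_Suc)
    moreover have "\<not> b < a" using g2 True by auto
    ultimately show ?thesis using step(3) sb[of "LR (Suc (Rcnt C n \<omega>)) \<omega>"] unfolding a_def[symmetric] b_def[symmetric]
      by (simp only: abs_le_iff) linarith
  next
    case False
    then have "Gs s (\<lambda>j. LR j \<omega>) (Rcnt C (Suc n) \<omega>) = a"
      "Gs r (\<lambda>j. LS j \<omega>) (Scnt C (Suc n) \<omega>) = b + r (LS (Suc (Scnt C n \<omega>)) \<omega>)"
      unfolding a_def b_def by (simp_all add: Rcnt_Suc Scnt_Suc Gs_Suc)
    moreover have "\<not> b > a" using g1 False by auto
    ultimately show ?thesis using step(3) rb[of "LS (Suc (Scnt C n \<omega>)) \<omega>"] unfolding a_def[symmetric] b_def[symmetric]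
      by (simp only: abs_le_iff) linarith
  qed
qed

lemma alt_R:
  assumes alt: "\<forall>k. Rcnt C (2 * k) \<omega> = k"
  shows "Rcnt C n \<omega> = n div 2 \<or> Rcnt C n \<omega> = n div 2 + 1"
proof (cases "even n")
  case True then show ?thesis using alt[rule_format, of "n div 2"] by auto
next
  case False
  then obtain k where k: "n = Suc (2 * k)" by (metis oddE Suc_eq_plus1)
  then show ?thesis using Rcnt_Suc[of C "2 * k" \<omega>] alt[rule_format, of k] by auto
qed

lemma Gc_cnt: "cnt y m i = Gc y m i - (if i = 0 then 0 else Gc y m (i - 1))"
proof (cases i)
  case 0
  then show ?thesis unfolding cnt_sum Gc_def by simp
next
  case (Suc i')
  have "Gc y m i - Gc y m i' = (\<Sum>j=1..m. (if y j \<le> i then 1 else 0) - (if y j \<le> i' then 1 else 0))"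
    unfolding Gc_def by (simp add: sum_subtractf)
  also have "\<dots> = cnt y m i" unfolding cnt_sum Suc by (intro sum.cong refl) auto
  finally show ?thesis using Suc by simp
qed

lemma cdf_split: "s i = cdfn s i - (if i = 0 then 0 else cdfn s (i - 1))"
  by (cases i) (simp_all add: cdfn_def)

lemma cnt_dev:
  assumes "\<And>k. \<bar>Gc y m k - real m * cdfn s k\<bar> \<le> B"
  shows "\<bar>cnt y m i - real m * s i\<bar> \<le> 2 * B"
proof -
  have eq: "cnt y m i - real m * s i = (Gc y m i - real m * cdfn s i)
     - (if i = 0 then 0 else Gc y m (i - 1) - real m * cdfn s (i - 1))"
    by (subst Gc_cnt, subst cdf_split[of s i]) (simp add: algebra_simps)
  moreover have B0: "B \<ge> 0" using assms[of 0] by simp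
  show ?thesis
  proof (cases "i = 0")
    case True
    with eq have "\<bar>cnt y m i - real m * s i\<bar> = \<bar>Gc y m i - real m * cdfn s i\<bar>" by simp
    then show ?thesis using assms[of i] B0 by linarith
  next
    case False
    with eq have "\<bar>cnt y m i - real m * s i\<bar> = \<bar>(Gc y m i - real m * cdfn s i) - (Gc y m (i - 1) - real m * cdfn s (i - 1))\<bar>" by simp
    moreover have "\<bar>(Gc y m i - real m * cdfn s i) - (Gc y m (i - 1) - real m * cdfn s (i - 1))\<bar> \<le> \<bar>Gc y m i - real m * cdfn s i\<bar> + \<bar>Gc y m (i - 1) - real m * cdfn s (i - 1)\<bar>"
      by (rule abs_triangle_ineq4)
    ultimately show ?thesis using assms[of i] assms[of "i - 1"] by linarith
  qed
qed

lemma Gn_eq: "Gn r s LR LS C n \<omega> =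
   (Gs s (\<lambda>j. LR j \<omega>) (Rcnt C n \<omega>) - Gs s (\<lambda>j. LR j \<omega>) (n div 2)
    + (Gs r (\<lambda>j. LS j \<omega>) (Scnt C n \<omega>) - Gs r (\<lambda>j. LS j \<omega>) (n div 2))) / 2"
proof -
  have "\<lfloor>real n / 2\<rfloor> = int (n div 2)" using floor_divide_of_nat_eq[of n 2] by simp
  then have f: "nat \<lfloor>real n / 2\<rfloor> = n div 2" by simp
  show ?thesis unfolding Gn_def Let_def f Gam_Gs by (simp add: algebra_simps)
qed

lemma matches_eq:
  assumes nz: "\<And>j. j \<ge> 1 \<Longrightarrow> LR j \<omega> \<noteq> 0"
  shows "matches LR LS C n \<omega> = Mt (\<lambda>j. LR j \<omega>) (\<lambda>j. LS j \<omega>) (Rcnt C n \<omega>) (Scnt C n \<omega>)"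
proof -
  define a where "a = Rcnt C n \<omega>"
  define b where "b = Scnt C n \<omega>"
  define x where "x = (\<lambda>j. LR j \<omega>)"
  define y where "y = (\<lambda>j. LS j \<omega>)"
  define X where "X = x ` {1..a}"
  have Nc: "real (Ncnt L m i \<omega>) = cnt (\<lambda>j. L j \<omega>) m i" for L m i unfolding Ncnt_def cnt_def ..
  have "matches LR LS C n \<omega> = (\<Sum>\<^sub>\<infinity>i\<in>{1..}. cnt x a i * cnt y b i)"
    unfolding matches_def Nc a_def b_def x_def y_def ..
  also have "\<dots> = (\<Sum>\<^sub>\<infinity>i\<in>X. cnt x a i * cnt y b i)"
  proof (rule infsum_cong_neutral)
    fix i assume "i \<in> {1..} - X"
    then have "{j \<in> {1..a}. x j = i} = {}" unfolding X_def by auto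
    then show "cnt x a i * cnt y b i = 0" unfolding cnt_def by simp
  next
    fix i assume "i \<in> X - {1..}"
    then obtain j where "j \<in> {1..a}" "i = x j" "i \<notin> {1..}" unfolding X_def by auto
    then show "cnt x a i * cnt y b i = 0" unfolding x_def using nz[of j] by auto
  qed auto
  also have "\<dots> = (\<Sum>i\<in>X. cnt x a i * cnt y b i)" unfolding X_def by (rule infsum_finite) simp
  also have "\<dots> = (\<Sum>i\<in>X. \<Sum>j=1..a. if x j = i then cnt y b i else 0)"
    unfolding cnt_sum[of x a] sum_distrib_right by (intro sum.cong refl) auto
  also have "\<dots> = (\<Sum>j=1..a. \<Sum>i\<in>X. if x j = i then cnt y b i else 0)" by (rule sum.swap)
  also have "\<dots> = (\<Sum>j=1..a. cnt y b (x j))"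
  proof (intro sum.cong refl)
    fix j assume "j \<in> {1..a}"
    then have "x j \<in> X" unfolding X_def by auto
    then show "(\<Sum>i\<in>X. if x j = i then cnt y b i else 0) = cnt y b (x j)"
      by (subst sum.delta') (simp_all add: X_def)
  qed
  also have "\<dots> = Mt x y a b" unfolding Mt_def ..
  finally show ?thesis unfolding a_def b_def x_def y_def .
qed

lemma HR_from_ev:
  fixes s :: "nat \<Rightarrow> real"
  assumes sb: "\<And>i. 0 \<le> s i \<and> s i \<le> 1" and mu: "0 \<le> \<mu>" "\<mu> \<le> 1"
    and ev: "\<forall>m\<ge>N. \<bar>Gs s x m - \<mu> * real m\<bar> < real m powr (3/5)"
  shows "\<bar>Gs s x m - \<mu> * real m\<bar> \<le> real N + 2 * real m powr (3/5)"
proof (cases "m \<ge> N")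
  case True
  then have "\<bar>Gs s x m - \<mu> * real m\<bar> < real m powr (3/5)" using ev by auto
  moreover have "real m powr (3/5) \<ge> 0" by simp
  ultimately show ?thesis by linarith
next
  case False
  have "0 \<le> Gs s x m" "Gs s x m \<le> real m" using Gs_bounds[OF sb] by auto
  moreover have "0 \<le> \<mu> * real m" "\<mu> * real m \<le> real m" using mu by (auto simp: mult_left_le_one_le)
  ultimately have "\<bar>Gs s x m - \<mu> * real m\<bar> \<le> real m" by (simp only: abs_le_iff) linarith
  then show ?thesis using False by (smt (verit) of_nat_less_iff powr_ge_zero not_le)
qed

lemma N_from_ev:
  fixes s :: "nat \<Rightarrow> real"
  assumes nn: "\<And>i. s i \<ge> 0" and su: "s sums 1"
    and ev: "\<forall>m\<ge>N. \<forall>k\<in>grid s m. \<bar>Gc y m k - real m * cdfn s k\<bar> < real m powr (3/5)"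
  shows "\<bar>cnt y m i - real m * s i\<bar> \<le> 2 * real N + 2 + 2 * real m powr (3/5)"
proof -
  have "\<bar>Gc y m k - real m * cdfn s k\<bar> \<le> real N + 1 + real m powr (3/5)" for k
  proof (cases "m \<ge> N \<and> m \<ge> 1")
    case True
    then have "\<bar>Gc y m k - real m * cdfn s k\<bar> \<le> real m powr (3/5) + 1"
      using ev by (intro bracket[OF nn su]) auto
    then show ?thesis by simp
  next
    case False
    have "0 \<le> Gc y m k" "Gc y m k \<le> real m" using Gc_bounds by auto
    moreover have "0 \<le> real m * cdfn s k" "real m * cdfn s k \<le> real m"
      using cdf_nn[OF nn] cdf_le1[OF nn su] by (auto simp: mult_left_le)
    ultimately have "\<bar>Gc y m k - real m * cdfn s k\<bar> \<le> real m" by (simp only: abs_le_iff) linarith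
    moreover have "real m \<le> real N + 1" using False by auto
    ultimately show ?thesis by (smt (verit) powr_ge_zero)
  qed
  from cnt_dev[OF this] show ?thesis by simp
qed

theorem lemma4p5:
  fixes M F0 :: "'a measure" and r s :: "nat \<Rightarrow> real"
    and LR LS :: "nat \<Rightarrow> 'a \<Rightarrow> nat" and CG CA :: "nat \<Rightarrow> 'a \<Rightarrow> bool"
  assumes P: "prob_space M"
    and r_nn: "\<forall>i. r i \<ge> 0" and r0: "r 0 = 0" and r_sum: "r sums 1"
    and s_nn: "\<forall>i. s i \<ge> 0" and s0: "s 0 = 0" and s_sum: "s sums 1"
    and mu_pos: "(\<Sum>i. r i * s i) > 0"
    and indep: "prob_space.indep_vars M (\<lambda>_. count_space UNIV)
                  (\<lambda>k. case k of Inl n \<Rightarrow> LR n | Inr n \<Rightarrow> LS n) ({1..} <+> {1..})"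
    and LR_dist: "\<forall>n\<ge>1. \<forall>i. measure M {\<omega> \<in> space M. LR n \<omega> = i} = r i"
    and LS_dist: "\<forall>n\<ge>1. \<forall>i. measure M {\<omega> \<in> space M. LS n \<omega> = i} = s i"
    and std: "sqrt (LINT \<omega>|M. (s (LR 1 \<omega>) - (LINT \<omega>'|M. s (LR 1 \<omega>')))\<^sup>2)
            + sqrt (LINT \<omega>|M. (r (LS 1 \<omega>) - (LINT \<omega>'|M. r (LS 1 \<omega>')))\<^sup>2) > 0"
    and F0_sub: "subalgebra M F0"
    and F0_indep: "prob_space.indep_set M (sets F0)
         (sigma_sets (space M) (\<Union>n\<in>{1..}. {LR n -` A \<inter> space M | A. True}
                                          \<union> {LS n -` A \<inter> space M | A. True}))"
    and greedy: "greedy_policy r s F0 LR LS CG"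
    and alt: "alternating_policy F0 LR LS CA"
  shows "AE \<omega> in M.
     (\<lambda>n. (matches LR LS CG n \<omega> - matches LR LS CA n \<omega>) / real n powr (5/4)
          - Gn r s LR LS CG n \<omega> / real n powr (1/4)) \<longlonglongrightarrow> 0"
proof -
  interpret prob_space M by (rule P)
  have spF: "space F0 = space M" using F0_sub by (simp add: subalgebra_def)
  define Lf where "Lf = (\<lambda>k. case k of Inl n \<Rightarrow> LR n | Inr n \<Rightarrow> LS n)"
  have ind: "indep_vars (\<lambda>_. count_space UNIV) Lf ({1..} <+> {1..})" using indep unfolding Lf_def .
  have subL: "Inl ` {1..} \<subseteq> ({1::nat..} <+> {1::nat..})" and subR: "Inr ` {1..} \<subseteq> ({1::nat..} <+> {1::nat..})"
    by auto
  have rv: "Lf k \<in> measurable M (count_space UNIV)" if "k \<in> {1..} <+> {1..}" for k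
    using ind that unfolding indep_vars_def by auto
  have LRm: "LR j \<in> measurable M (count_space UNIV)" if "j \<ge> 1" for j
    using rv[of "Inl j"] that by (auto simp: Lf_def)
  have LSm: "LS j \<in> measurable M (count_space UNIV)" if "j \<ge> 1" for j
    using rv[of "Inr j"] that by (auto simp: Lf_def)
  have rnn: "\<And>i. r i \<ge> 0" and snn: "\<And>i. s i \<ge> 0" using r_nn s_nn by auto
  have sb: "\<And>i. 0 \<le> s i \<and> s i \<le> 1"
  proof -
    fix i
    have "s i \<le> cdfn s i" unfolding cdfn_def using snn by (intro member_le_sum) auto
    then show "0 \<le> s i \<and> s i \<le> 1" using cdf_le1[OF snn s_sum, of i] snn[of i] by simp
  qed
  have rb: "\<And>i. 0 \<le> r i \<and> r i \<le> 1"
  proof -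
    fix i
    have "r i \<le> cdfn r i" unfolding cdfn_def using rnn by (intro member_le_sum) auto
    then show "0 \<le> r i \<and> r i \<le> 1" using cdf_le1[OF rnn r_sum, of i] rnn[of i] by simp
  qed
  define \<mu> where "\<mu> = (\<Sum>i. r i * s i)"
  have mu0: "\<mu> > 0" using mu_pos unfolding \<mu>_def .
  have rsum: "summable r" using r_sum by (simp add: sums_iff)
  have rssum: "summable (\<lambda>i. r i * s i)"
    by (rule summable_comparison_test'[OF rsum, where N=0]) (use rb sb in \<open>auto simp: mult_left_le\<close>)
  have mu1: "\<mu> \<le> 1"
  proof -
    have "\<mu> \<le> suminf r" unfolding \<mu>_def
      by (rule suminf_le[OF _ rssum rsum]) (use rb sb in \<open>auto simp: mult_left_le\<close>)
    then show ?thesis using r_sum by (simp add: sums_iff)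
  qed
  have eR: "expectation (\<lambda>\<omega>. s (Lf (Inl j) \<omega>)) = \<mu>" if "j \<ge> 1" for j
    unfolding Lf_def \<mu>_def using expect_fun[where g=s, OF P LRm[OF that] _ rnn r_sum sb] LR_dist that by simp
  have eS: "expectation (\<lambda>\<omega>. r (Lf (Inr j) \<omega>)) = \<mu>" if "j \<ge> 1" for j
    unfolding Lf_def \<mu>_def using expect_fun[where g=r, OF P LSm[OF that] _ snn s_sum rb] LS_dist that by (simp add: mult.commute)
  have ind_sum: "(\<Sum>i. p i * (if i \<le> k then 1 else 0)) = cdfn p k" for p :: "nat \<Rightarrow> real" and k
    unfolding cdfn_def by (subst suminf_finite[of "{..k}"]) auto
  have eRc: "expectation (\<lambda>\<omega>. (if Lf (Inl j) \<omega> \<le> k then 1 else 0)) = cdfn r k" if "j \<ge> 1" for j k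
    unfolding Lf_def using expect_fun[OF P LRm[OF that], of r "\<lambda>i. if i \<le> k then 1 else 0"] LR_dist that rnn r_sum ind_sum
    by simp
  have eSc: "expectation (\<lambda>\<omega>. (if Lf (Inr j) \<omega> \<le> k then 1 else 0)) = cdfn s k" if "j \<ge> 1" for j k
    unfolding Lf_def using expect_fun[OF P LSm[OF that], of s "\<lambda>i. if i \<le> k then 1 else 0"] LS_dist that snn s_sum ind_sum
    by simp
  have B1: "AE \<omega> in M. eventually (\<lambda>m. \<forall>k\<in>{0::nat}.
            \<bar>(\<Sum>j=1..m. s (Lf (Inl j) \<omega>)) - real m * \<mu>\<bar> < real m powr (3/5)) sequentially"
    by (rule bc_grid[OF P ind _ subL, where g="\<lambda>_. s" and c="\<lambda>_. \<mu>" and K="\<lambda>_. {0}"])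
       (use sb eR in auto)
  have B2: "AE \<omega> in M. eventually (\<lambda>m. \<forall>k\<in>{0::nat}.
            \<bar>(\<Sum>j=1..m. r (Lf (Inr j) \<omega>)) - real m * \<mu>\<bar> < real m powr (3/5)) sequentially"
    by (rule bc_grid[OF P ind _ subR, where g="\<lambda>_. r" and c="\<lambda>_. \<mu>" and K="\<lambda>_. {0}"])
       (use rb eS in auto)
  have B3: "AE \<omega> in M. eventually (\<lambda>m. \<forall>k\<in>grid r m.
            \<bar>(\<Sum>j=1..m. (\<lambda>k i. if i \<le> k then 1 else 0) k (Lf (Inl j) \<omega>)) - real m * cdfn r k\<bar> < real m powr (3/5)) sequentially"
    by (rule bc_grid[OF P ind _ subL, where g="\<lambda>k i. if i \<le> k then 1 else 0" and c="cdfn r" and K="grid r"])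
       (use eRc grid_fin grid_card in auto)
  have B4: "AE \<omega> in M. eventually (\<lambda>m. \<forall>k\<in>grid s m.
            \<bar>(\<Sum>j=1..m. (\<lambda>k i. if i \<le> k then 1 else 0) k (Lf (Inr j) \<omega>)) - real m * cdfn s k\<bar> < real m powr (3/5)) sequentially"
    by (rule bc_grid[OF P ind _ subR, where g="\<lambda>k i. if i \<le> k then 1 else 0" and c="cdfn s" and K="grid s"])
       (use eSc grid_fin grid_card in auto)
  have NZ: "AE \<omega> in M. \<forall>j\<in>{1..}. LR j \<omega> \<noteq> 0 \<and> LS j \<omega> \<noteq> 0"
  proof (rule AE_ball_countable[THEN iffD2])
    show "countable {1::nat..}" by simp
    show "\<forall>j\<in>{1..}. AE \<omega> in M. LR j \<omega> \<noteq> 0 \<and> LS j \<omega> \<noteq> 0"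
    proof
      fix j :: nat assume j: "j \<in> {1..}"
      have n1: "{\<omega> \<in> space M. LR j \<omega> = 0} \<in> null_sets M"
        using LR_dist j r0 LRm[of j] by (auto simp: null_sets_def emeasure_eq_measure)
      have n2: "{\<omega> \<in> space M. LS j \<omega> = 0} \<in> null_sets M"
        using LS_dist j s0 LSm[of j] by (auto simp: null_sets_def emeasure_eq_measure)
      show "AE \<omega> in M. LR j \<omega> \<noteq> 0 \<and> LS j \<omega> \<noteq> 0"
        using AE_not_in[OF n1] AE_not_in[OF n2] AE_space by eventually_elim auto
    qed
  qed
  show ?thesis
    using B1 B2 B3 B4 NZ AE_space
  proof eventually_elim
    case (elim \<omega>)
    define x where "x = (\<lambda>j. LR j \<omega>)"
    define y where "y = (\<lambda>j. LS j \<omega>)"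
    from elim(1) obtain N1 where N1: "\<forall>m\<ge>N1. \<bar>Gs s x m - \<mu> * real m\<bar> < real m powr (3/5)"
      unfolding eventually_sequentially by (auto simp: Lf_def Gs_def x_def mult.commute)
    from elim(2) obtain N2 where N2: "\<forall>m\<ge>N2. \<bar>Gs r y m - \<mu> * real m\<bar> < real m powr (3/5)"
      unfolding eventually_sequentially by (auto simp: Lf_def Gs_def y_def mult.commute)
    from elim(3) obtain N3 where N3: "\<forall>m\<ge>N3. \<forall>k\<in>grid r m. \<bar>Gc x m k - real m * cdfn r k\<bar> < real m powr (3/5)"
      unfolding eventually_sequentially by (auto simp: Lf_def Gc_def x_def)
    from elim(4) obtain N4 where N4: "\<forall>m\<ge>N4. \<forall>k\<in>grid s m. \<bar>Gc y m k - real m * cdfn s k\<bar> < real m powr (3/5)"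
      unfolding eventually_sequentially by (auto simp: Lf_def Gc_def y_def)
    define C where "C = 2 * real (N1 + N2 + N3 + N4) + 2"
    have C0: "C \<ge> 0" unfolding C_def by simp
    have HR: "\<bar>Gs s x m - \<mu> * real m\<bar> \<le> C + 2 * real m powr (3/5)" for m
      using HR_from_ev[OF sb less_imp_le[OF mu0] mu1 N1, of m] unfolding C_def by simp
    have HS: "\<bar>Gs r y m - \<mu> * real m\<bar> \<le> C + 2 * real m powr (3/5)" for m
      using HR_from_ev[OF rb less_imp_le[OF mu0] mu1 N2, of m] unfolding C_def by simp
    have NRb: "\<bar>cnt x m i - real m * r i\<bar> \<le> C + 2 * real m powr (3/5)" for m i
      using N_from_ev[OF rnn r_sum N3, of m i] unfolding C_def by simp
    have NSb: "\<bar>cnt y m i - real m * s i\<bar> \<le> C + 2 * real m powr (3/5)" for m i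
      using N_from_ev[OF snn s_sum N4, of m i] unfolding C_def by simp
    have gr: "\<forall>n\<ge>1. (Gam r LS (Scnt CG n \<omega>) \<omega> > Gam s LR (Rcnt CG n \<omega>) \<omega> \<longrightarrow> CG (Suc n) \<omega>) \<and>
        (Gam r LS (Scnt CG n \<omega>) \<omega> < Gam s LR (Rcnt CG n \<omega>) \<omega> \<longrightarrow> \<not> CG (Suc n) \<omega>)"
      using greedy elim(6) spF unfolding greedy_policy_def by auto
    have bal: "\<bar>Gs s x (Rcnt CG n \<omega>) - Gs r y (Scnt CG n \<omega>)\<bar> \<le> 1" if "n \<ge> 1" for n
      unfolding x_def y_def by (rule greedy_bal[OF sb rb gr that])
    have altR: "\<forall>k. Rcnt CA (2 * k) \<omega> = k" using alt elim(6) spF unfolding alternating_policy_def by auto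
    have RS: "Rcnt C n \<omega> + Scnt C n \<omega> = n" for C n unfolding Scnt_def using Rcnt_le[of C n \<omega>] by simp
    have lim: "(\<lambda>n. (Mt x y (Rcnt CG n \<omega>) (Scnt CG n \<omega>) - Mt x y (Rcnt CA n \<omega>) (Scnt CA n \<omega>)) / real n powr (5/4)
            - ((Gs s x (Rcnt CG n \<omega>) - Gs s x (n div 2) + (Gs r y (Scnt CG n \<omega>) - Gs r y (n div 2))) / 2) / real n powr (1/4))
         \<longlonglongrightarrow> 0"
      by (rule core_lim[OF sb rb mu0 C0 HR HS NRb NSb RS bal RS alt_R[OF altR]])
    have nz: "\<And>j. j \<ge> 1 \<Longrightarrow> LR j \<omega> \<noteq> 0" using elim(5) by auto
    have meq: "matches LR LS C n \<omega> = Mt x y (Rcnt C n \<omega>) (Scnt C n \<omega>)" for C n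
      unfolding x_def y_def by (rule matches_eq) (rule nz)
    have geq: "Gn r s LR LS CG n \<omega> = (Gs s x (Rcnt CG n \<omega>) - Gs s x (n div 2) + (Gs r y (Scnt CG n \<omega>) - Gs r y (n div 2))) / 2" for n
      unfolding x_def y_def by (rule Gn_eq)
    show ?case unfolding meq geq by (rule lim)
  qed
qed

end
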